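(* Let $A=[a_1,\ldots,a_n]$ and $B=[b_1,\ldots,b_n]$ be matrices in $\mathbb{R}^{m,n}$ whose columns have Euclidean norm $1$, and suppose $\mathcal{M}_D(A,B)\ne 1$. Then \[ \mathcal{M}(A+B)\le\frac{\mathcal{M}(A)+2\mathcal{M}_{OD}(A,B)+\mathcal{M}(B)}{2\bigl(1-\mathcal{M}_D(A,B)\bigr)}. \]
   Context: For $C=[c_1,\ldots,c_n]$ with columns of norm $1$, the mutual incoherence is $\mathcal{M}(C)=\max_{i\ne j}|\langle c_i,c_j\rangle|$. For $A+B$, whose columns $a_i+b_i$ are nonzero but not necessarily normalized, $\mathcal{M}(A+B)$ means the mutual incoherence of the column-normalized matrix, i.e. $\max_{i\ne j}\frac{|\langle a_i+b_i,a_j+b_j\rangle|}{\|a_i+b_i\|_2\|a_j+b_j\|_2}$. The off-diagonal mutual incoherence is $\mathcal{M}_{OD}(A,B)=\max_{i\ne j}|\langle a_i,b_j\rangle|$ and the diagonal mutual incoherence is $\mathcal{M}_D(A,B)=\max_i|\langle a_i,b_i\rangle|$. *)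

theory Defs
  imports "HOL-Analysis.Analysis"
begin

text \<open>Matrices in R^{m x n} are represented as real^'n^'m; columns are column j C.
  Maxima over the pairs i \<noteq> j include 0, so that the empty case (n = 1) gives 0.\<close>

definition mutual_incoherence :: "real^'n::finite^'m::finite \<Rightarrow> real" where
  "mutual_incoherence C =
     Max ({0} \<union> {\<bar>column i C \<bullet> column j C\<bar> / (norm (column i C) * norm (column j C)) | i j. i \<noteq> j})"

definition offdiag_mutual_incoherence :: "real^'n::finite^'m::finite \<Rightarrow> real^'n^'m \<Rightarrow> real" where
  "offdiag_mutual_incoherence A B =
     Max ({0} \<union> {\<bar>column i A \<bullet> column j B\<bar> | i j. i \<noteq> j})"

definition diag_mutual_incoherence :: "real^'n::finite^'m::finite \<Rightarrow> real^'n^'m \<Rightarrow> real" where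
  "diag_mutual_incoherence A B = Max {\<bar>column i A \<bullet> column i B\<bar> | i. True}"

end

theory Submission
  imports Defs
begin

lemma column_plus: "column i (A + B) = column i A + column i (B::real^'n::finite^'m::finite)"
  by (simp add: column_def vec_eq_iff)

lemma fin_pairs: "finite {f i j | (i::'a::finite) (j::'b::finite). P i j}"
proof -
  have "{f i j | i j. P i j} \<subseteq> (\<lambda>(i,j). f i j) ` UNIV" by auto
  thus ?thesis by (rule finite_subset) simp
qed

lemma fin_single: "finite {f i | (i::'a::finite). P i}"
proof -
  have "{f i | i. P i} \<subseteq> f ` UNIV" by auto
  thus ?thesis by (rule finite_subset) simp
qed

lemma fin_ex: "finite {u. \<exists>i::'a::finite. u = f i}"
proof -
  have "{u. \<exists>i. u = f i} \<subseteq> f ` UNIV" by auto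
  thus ?thesis by (rule finite_subset) simp
qed

theorem theorem4p4:
  fixes A B :: "real^'n::finite^'m::finite"
  assumes "\<forall>i. norm (column i A) = 1"
    and "\<forall>i. norm (column i B) = 1"
    and "diag_mutual_incoherence A B \<noteq> 1"
  shows "mutual_incoherence (A + B) \<le>
    (mutual_incoherence A + 2 * offdiag_mutual_incoherence A B + mutual_incoherence B)
      / (2 * (1 - diag_mutual_incoherence A B))"
proof -
  define MA where "MA = mutual_incoherence A"
  define MB where "MB = mutual_incoherence B"
  define MO where "MO = offdiag_mutual_incoherence A B"
  define MD where "MD = diag_mutual_incoherence A B"
  let ?a = "\<lambda>i. column i A" and ?b = "\<lambda>i. column i B"
  have nA: "\<And>i. norm (?a i) = 1" and nB: "\<And>i. norm (?b i) = 1" using assms by auto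
  have MA: "\<And>i j. i \<noteq> j \<Longrightarrow> \<bar>?a i \<bullet> ?a j\<bar> \<le> MA" and MA0: "0 \<le> MA"
    unfolding MA_def mutual_incoherence_def
    by (auto intro!: Max_ge simp: fin_pairs nA)
  have MB: "\<And>i j. i \<noteq> j \<Longrightarrow> \<bar>?b i \<bullet> ?b j\<bar> \<le> MB" and MB0: "0 \<le> MB"
    unfolding MB_def mutual_incoherence_def
    by (auto intro!: Max_ge simp: fin_pairs nB)
  have MO: "\<And>i j. i \<noteq> j \<Longrightarrow> \<bar>?a i \<bullet> ?b j\<bar> \<le> MO" and MO0: "0 \<le> MO"
    unfolding MO_def offdiag_mutual_incoherence_def
    by (auto intro!: Max_ge simp: fin_pairs)
  have MD: "\<And>i. \<bar>?a i \<bullet> ?b i\<bar> \<le> MD"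
    unfolding MD_def diag_mutual_incoherence_def
    by (auto intro!: Max_ge simp: fin_single fin_ex)
  have "MD \<in> {\<bar>?a i \<bullet> ?b i\<bar> | i. True}"
    unfolding MD_def diag_mutual_incoherence_def
    by (rule Max_in) (auto simp: fin_single fin_ex)
  then obtain k where k: "MD = \<bar>?a k \<bullet> ?b k\<bar>" by auto
  have "MD \<le> 1" using k Cauchy_Schwarz_ineq2[of "?a k" "?b k"] nA nB by simp
  with assms(3) have MD1: "MD < 1" unfolding MD_def by simp
  define d where "d = 2 * (1 - MD)"
  have d0: "0 < d" using MD1 d_def by simp
  define N where "N = MA + 2 * MO + MB"
  have N0: "0 \<le> N" using MA0 MB0 MO0 N_def by simp
  have nc: "sqrt d \<le> norm (?a i + ?b i)" for i
  proof -
    have "norm (?a i + ?b i)^2 = ?a i \<bullet> ?a i + 2 * (?a i \<bullet> ?b i) + ?b i \<bullet> ?b i"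
      by (simp add: power2_norm_eq_inner inner_add_left inner_add_right inner_commute)
    also have "\<dots> = 2 + 2 * (?a i \<bullet> ?b i)"
      using nA[of i] nB[of i] by (simp add: power2_norm_eq_inner[symmetric])
    finally have e: "norm (?a i + ?b i)^2 = 2 + 2 * (?a i \<bullet> ?b i)" .
    have "d \<le> norm (?a i + ?b i)^2" using e MD[of i] d_def by (simp add: abs_le_iff)
    thus ?thesis using real_sqrt_le_mono[of d "norm (?a i + ?b i)^2"] by simp
  qed
  have key: "\<bar>(?a i + ?b i) \<bullet> (?a j + ?b j)\<bar> / (norm (?a i + ?b i) * norm (?a j + ?b j)) \<le> N / d"
    if ij: "i \<noteq> j" for i j
  proof -
    have "\<bar>(?a i + ?b i) \<bullet> (?a j + ?b j)\<bar> \<le>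
        \<bar>?a i \<bullet> ?a j\<bar> + \<bar>?a i \<bullet> ?b j\<bar> + \<bar>?a j \<bullet> ?b i\<bar> + \<bar>?b i \<bullet> ?b j\<bar>"
      by (simp add: inner_add_left inner_add_right inner_commute)
    also have "\<dots> \<le> N" using MA[OF ij] MB[OF ij] MO[OF ij] MO[of j i] ij N_def by auto
    finally have num: "\<bar>(?a i + ?b i) \<bullet> (?a j + ?b j)\<bar> \<le> N" .
    have "sqrt d * sqrt d \<le> norm (?a i + ?b i) * norm (?a j + ?b j)"
      using nc[of i] nc[of j] d0 by (intro mult_mono) auto
    hence den: "d \<le> norm (?a i + ?b i) * norm (?a j + ?b j)" using d0 by simp
    show ?thesis by (rule frac_le[OF N0 num d0 den])
  qed
  have "mutual_incoherence (A + B) \<le> N / d"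
    unfolding mutual_incoherence_def column_plus
    using key N0 d0 by (auto simp: fin_pairs)
  thus ?thesis unfolding N_def d_def MA_def MB_def MO_def MD_def .
qed

end
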